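(* Let $d\ge2$, $1\le r_p\le n_p$ for $1\le p\le d$, let $f:\Omega\to\mathbb{R}$ be any function on $\Omega=\mathrm{St}(r_1,n_1,\mathbb{C})\times\cdots\times\mathrm{St}(r_d,n_d,\mathbb{C})$, and let $\tilde f=f\circ\rho$ on $\Upsilon=\mathcal{U}_{n_1}\times\cdots\times\mathcal{U}_{n_d}$. Then $f$ is scale invariant if and only if $\tilde f$ is scale invariant.
   Context: $\mathrm{St}(r,n,\mathbb{C})=\{X\in\mathbb{C}^{n\times r}:X^HX=I_r\}$, $\mathcal{U}_n$ the unitary group, and $\rho:\Upsilon\to\Omega$ keeps the first $r_p$ columns of the $p$-th component for each $p$. A function $g$ on $\mathrm{St}(r,n,\mathbb{C})$ is scale invariant if $g(XR)=g(X)$ for all $X$ and all $r\times r$ diagonal $R$ with unimodular diagonal entries. $f$ is scale invariant if for every $p$ and every fixed choice of the other components, the restricted function $X\mapsto f(X^{(1)},\dots,X^{(p-1)},X,X^{(p+1)},\dots,X^{(d)})$ on $\mathrm{St}(r_p,n_p,\mathbb{C})$ is scale invariant; $\tilde f$ is scale invariant in the same sense, with $\mathcal{U}_{n_p}=\mathrm{St}(n_p,n_p,\mathbb{C})$ in place of $\mathrm{St}(r_p,n_p,\mathbb{C})$. *)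

theory Defs
  imports "Jordan_Normal_Form.Schur_Decomposition"
begin

definition stiefel :: "nat \<Rightarrow> nat \<Rightarrow> complex mat set" where
  "stiefel r n = {X. X \<in> carrier_mat n r \<and> mat_adjoint X * X = 1\<^sub>m r}"

definition unimod_diag :: "nat \<Rightarrow> complex mat set" where
  "unimod_diag r = {R. R \<in> carrier_mat r r \<and> diagonal_mat R \<and> (\<forall>i<r. cmod (R $$ (i,i)) = 1)}"

definition scale_inv_St :: "nat \<Rightarrow> nat \<Rightarrow> (complex mat \<Rightarrow> real) \<Rightarrow> bool" where
  "scale_inv_St r n g \<longleftrightarrow> (\<forall>X\<in>stiefel r n. \<forall>R\<in>unimod_diag r. g (X * R) = g X)"

text \<open>A point of the product St(r_1,n_1) x ... x St(r_d,n_d) is a list of length d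
  (components indexed 0..d-1).\<close>
definition multi_scale_inv ::
  "nat \<Rightarrow> (nat \<Rightarrow> nat) \<Rightarrow> (nat \<Rightarrow> nat) \<Rightarrow> (complex mat list \<Rightarrow> real) \<Rightarrow> bool" where
  "multi_scale_inv d r n f \<longleftrightarrow>
     (\<forall>p<d. \<forall>Xs. length Xs = d \<and> (\<forall>q<d. q \<noteq> p \<longrightarrow> Xs ! q \<in> stiefel (r q) (n q)) \<longrightarrow>
        scale_inv_St (r p) (n p) (\<lambda>X. f (Xs[p := X])))"

definition first_cols :: "nat \<Rightarrow> complex mat \<Rightarrow> complex mat" where
  "first_cols k X = mat (dim_row X) k (\<lambda>(i,j). X $$ (i,j))"

definition rho :: "nat \<Rightarrow> (nat \<Rightarrow> nat) \<Rightarrow> complex mat list \<Rightarrow> complex mat list" where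
  "rho d r Us = map (\<lambda>p. first_cols (r p) (Us ! p)) [0..<d]"

end

theory Submission
  imports Defs
begin

definition onl :: "complex vec list \<Rightarrow> bool" where
  "onl vs \<longleftrightarrow> (\<forall>i<length vs. \<forall>j<length vs. vs!i \<bullet>c vs!j = (if i = j then 1 else 0))"

lemma onl_corth: "onl vs \<Longrightarrow> corthogonal vs"
  unfolding onl_def corthogonal_def by auto

lemma ext_vec:
  assumes V: "set vs \<subseteq> carrier_vec m" and o: "onl vs" and l: "length vs < m"
  shows "\<exists>w \<in> carrier_vec m. w \<bullet>c w = 1 \<and> (\<forall>v\<in>set vs. w \<bullet>c v = 0 \<and> v \<bullet>c w = 0)"
proof -
  interpret cof_vec_space m "TYPE(complex)" .
  have "span (set vs) \<noteq> carrier_vec m"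
  proof
    assume "span (set vs) = carrier_vec m"
    then have "card (set vs) \<ge> dim" using gen_ge_dim[of "set vs"] V by auto
    then have "card (set vs) \<ge> m" using dim_is_n by simp
    moreover have "card (set vs) \<le> length vs" by (rule card_length)
    ultimately show False using l by simp
  qed
  moreover have "span (set vs) \<subseteq> carrier_vec m" using span_closed[OF V] by auto
  ultimately obtain u where u: "u \<in> carrier_vec m" "u \<notin> span (set vs)" by blast
  define w0 where "w0 = adjuster m u vs + u"
  have corth: "corthogonal vs" using onl_corth[OF o] .
  have co: "corthogonal (w0 # vs)" unfolding w0_def
    by (rule adjust_orthogonal[OF V corth u])
  have dist: "distinct vs" using corthogonal_distinct[OF corth] .
  have w0c: "w0 \<in> carrier_vec m" unfolding w0_def using u V dist by auto
  define c where "c = w0 \<bullet>c w0"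
  have c0: "c \<noteq> 0" using corthogonalD[OF co, of 0 0] unfolding c_def by simp
  have "0 \<le> c" unfolding c_def by (rule conjugate_square_ge_0_vec)
  then have cre: "c = complex_of_real (Re c)" and cpos: "Re c \<ge> 0"
    by (auto simp: less_eq_complex_def complex_eq_iff)
  with c0 have cpos': "Re c > 0" by (metis less_eq_real_def of_real_0)
  define a where "a = complex_of_real (1 / sqrt (Re c))"
  define w where "w = a \<cdot>\<^sub>v w0"
  have wc: "w \<in> carrier_vec m" unfolding w_def using w0c by auto
  have "w \<bullet>c w = a * conjugate a * c"
    unfolding w_def c_def conjugate_smult_vec using w0c by (simp add: ac_simps)
  also have "\<dots> = complex_of_real (1 / sqrt (Re c) * (1 / sqrt (Re c)) * Re c)"
    unfolding a_def by (subst (3) cre) (simp only: of_real_mult, simp)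
  also have "\<dots> = 1" using cpos' by (simp add: field_simps)
  finally have w1: "w \<bullet>c w = 1" .
  have orth: "w \<bullet>c v = 0 \<and> v \<bullet>c w = 0" if v: "v \<in> set vs" for v
  proof -
    obtain j where j: "j < length vs" "v = vs ! j" using v by (metis in_set_conv_nth)
    have vc: "v \<in> carrier_vec m" using V v by auto
    have "w0 \<bullet>c v = 0" using corthogonalD[OF co, of 0 "Suc j"] j by simp
    moreover have "v \<bullet>c w0 = 0" using corthogonalD[OF co, of "Suc j" 0] j by simp
    ultimately show ?thesis unfolding w_def conjugate_smult_vec using vc w0c by simp
  qed
  show ?thesis using wc w1 orth by blast
qed
lemma onl_snoc:
  assumes V: "set vs \<subseteq> carrier_vec m" and o: "onl vs" and w: "w \<in> carrier_vec m"
    and w1: "w \<bullet>c w = 1" and wo: "\<forall>v\<in>set vs. w \<bullet>c v = 0 \<and> v \<bullet>c w = 0"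
  shows "onl (vs @ [w])"
  unfolding onl_def
proof (intro allI impI)
  fix i j assume i: "i < length (vs @ [w])" and j: "j < length (vs @ [w])"
  show "(vs @ [w]) ! i \<bullet>c (vs @ [w]) ! j = (if i = j then 1 else 0)"
  proof (cases "i < length vs")
    case True
    then show ?thesis
    proof (cases "j < length vs")
      case True
      with \<open>i < length vs\<close> show ?thesis using o unfolding onl_def by (simp add: nth_append)
    next
      case False
      then have "j = length vs" using j by simp
      then show ?thesis using True wo by (auto simp: nth_append)
    qed
  next
    case False
    then have ii: "i = length vs" using i by simp
    show ?thesis
    proof (cases "j < length vs")
      case True
      then show ?thesis using ii wo by (auto simp: nth_append)
    next
      case False
      then have "j = length vs" using j by simp
      then show ?thesis using ii w1 by (auto simp: nth_append)
    qed
  qed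
qed

lemma onl_complete:
  "set vs \<subseteq> carrier_vec m \<Longrightarrow> onl vs \<Longrightarrow> length vs \<le> m \<Longrightarrow>
   \<exists>ws. set ws \<subseteq> carrier_vec m \<and> onl ws \<and> length ws = m \<and> take (length vs) ws = vs"
proof (induction "m - length vs" arbitrary: vs)
  case 0
  then show ?case by (intro exI[of _ vs]) auto
next
  case (Suc k)
  then have l: "length vs < m" by simp
  obtain w where w: "w \<in> carrier_vec m" "w \<bullet>c w = 1" "\<forall>v\<in>set vs. w \<bullet>c v = 0 \<and> v \<bullet>c w = 0"
    using ext_vec[OF Suc.prems(1,2) l] by blast
  have o': "onl (vs @ [w])" by (rule onl_snoc[OF Suc.prems(1,2) w])
  have "k = m - length (vs @ [w])" using Suc.hyps(2) by simp
  from Suc.hyps(1)[OF this _ o'] Suc.prems(1) w(1) l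
  obtain ws where ws: "set ws \<subseteq> carrier_vec m" "onl ws" "length ws = m" "take (length (vs @ [w])) ws = vs @ [w]"
    by auto
  have "take (length vs) ws = vs"
    using arg_cong[OF ws(4), of "take (length vs)"] by (simp add: min_def)
  then show ?case using ws by blast
qed

lemma adj_entry:
  assumes X: "X \<in> carrier_mat m k" and i: "i < k" and j: "j < k"
  shows "(mat_adjoint X * X) $$ (i,j) = col X j \<bullet>c col X i"
proof -
  have "(mat_adjoint X * X) $$ (i,j) = conjugate (col X i) \<bullet> col X j"
  proof -
    have e: "vec m (($) (conjugate (col X i))) = conjugate (col X i)"
      by (rule eq_vecI) (use X in auto)
    show ?thesis using X i j e unfolding mat_adjoint_def by (simp add: mat_of_rows_def)
  qed
  also have "\<dots> = col X j \<bullet>c col X i"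
    by (rule conjugate_vec_sprod_comm[symmetric, of _ m]) (use X in auto)
  finally show ?thesis .
qed

lemma stiefel_iff:
  assumes X: "X \<in> carrier_mat m k"
  shows "X \<in> stiefel k m \<longleftrightarrow> onl (cols X)"
proof -
  have "mat_adjoint X * X \<in> carrier_mat k k" using X unfolding mat_adjoint_def by auto
  then have "mat_adjoint X * X = 1\<^sub>m k \<longleftrightarrow>
     (\<forall>i<k. \<forall>j<k. (mat_adjoint X * X) $$ (i,j) = (if i = j then 1 else 0))"
    by (auto intro!: eq_matI)
  also have "\<dots> \<longleftrightarrow> (\<forall>i<k. \<forall>j<k. col X j \<bullet>c col X i = (if i = j then 1 else 0))"
    using adj_entry[OF X] by simp
  also have "\<dots> \<longleftrightarrow> onl (cols X)"
    unfolding onl_def using X by auto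
  finally show ?thesis unfolding stiefel_def using X by auto
qed

lemma stiefel_complete:
  assumes Y: "Y \<in> stiefel k m" and km: "k \<le> m"
  shows "\<exists>U \<in> stiefel m m. first_cols k U = Y"
proof -
  have Yc: "Y \<in> carrier_mat m k" using Y unfolding stiefel_def by auto
  have o: "onl (cols Y)" using Y stiefel_iff[OF Yc] by simp
  have V: "set (cols Y) \<subseteq> carrier_vec m" using Yc by (auto simp: cols_def)
  obtain ws where ws: "set ws \<subseteq> carrier_vec m" "onl ws" "length ws = m" "take k ws = cols Y"
    using onl_complete[OF V o] km Yc by auto
  define U where "U = mat_of_cols m ws"
  have Uc: "U \<in> carrier_mat m m" unfolding U_def using ws by auto
  have "cols U = ws" unfolding U_def using ws by simp
  then have "U \<in> stiefel m m" using stiefel_iff[OF Uc] ws by simp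
  moreover have "first_cols k U = Y"
  proof (rule eq_matI)
    fix i j assume i: "i < dim_row Y" and j: "j < dim_col Y"
    have jk: "j < k" using j Yc by simp
    have "ws ! j = cols Y ! j" using arg_cong[OF ws(4), of "\<lambda>l. l ! j"] jk by simp
    then show "first_cols k U $$ (i, j) = Y $$ (i, j)"
      using i jk Yc ws km unfolding first_cols_def U_def
      by (simp add: mat_of_cols_index)
  qed (use Yc Uc in \<open>auto simp: first_cols_def\<close>)
  ultimately show ?thesis by blast
qed
lemma first_cols_stiefel:
  assumes U: "U \<in> stiefel m m" and km: "k \<le> m"
  shows "first_cols k U \<in> stiefel k m"
proof -
  have Uc: "U \<in> carrier_mat m m" using U unfolding stiefel_def by auto
  have Fc: "first_cols k U \<in> carrier_mat m k" using Uc unfolding first_cols_def by auto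
  have o: "onl (cols U)" using U stiefel_iff[OF Uc] by simp
  have "cols (first_cols k U) = take k (cols U)"
  proof (rule nth_equalityI)
    show "length (cols (first_cols k U)) = length (take k (cols U))" using Fc Uc km by simp
    fix j assume "j < length (cols (first_cols k U))"
    then have j: "j < k" using Fc by simp
    have "col (first_cols k U) j = col U j"
      by (rule eq_vecI) (use Uc j km in \<open>auto simp: first_cols_def\<close>)
    then show "cols (first_cols k U) ! j = take k (cols U) ! j" using j Fc Uc km by simp
  qed
  moreover have "onl (take k (cols U))" using o unfolding onl_def by auto
  ultimately show ?thesis using stiefel_iff[OF Fc] by simp
qed

definition blk :: "nat \<Rightarrow> complex mat \<Rightarrow> complex mat" where
  "blk k R = mat k k (\<lambda>(i,j). R $$ (i,j))"

lemma first_cols_mult: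
  assumes X: "X \<in> carrier_mat m m" and R: "R \<in> carrier_mat m m" and D: "diagonal_mat R"
    and km: "k \<le> m"
  shows "first_cols k (X * R) = first_cols k X * blk k R"
proof (rule eq_matI)
  fix i j assume i: "i < dim_row (first_cols k X * blk k R)" and j: "j < dim_col (first_cols k X * blk k R)"
  have i': "i < m" and j': "j < k" using i j X by (auto simp: first_cols_def blk_def)
  have Rz: "R $$ (l, j) = 0" if "l < m" "l \<noteq> j" for l
    using D R that j' km unfolding diagonal_mat_def by auto
  have "first_cols k (X * R) $$ (i,j) = (\<Sum>l\<in>{0..<m}. X $$ (i,l) * R $$ (l,j))"
    using X R i' j' km by (simp add: first_cols_def scalar_prod_def)
  also have "\<dots> = (\<Sum>l\<in>{0..<m}. if l = j then X $$ (i,j) * R $$ (j,j) else 0)"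
    by (rule sum.cong) (auto simp: Rz)
  also have "\<dots> = X $$ (i,j) * R $$ (j,j)" using j' km by simp
  also have "\<dots> = (\<Sum>l\<in>{0..<k}. if l = j then X $$ (i,j) * R $$ (j,j) else 0)" using j' by simp
  also have "\<dots> = (\<Sum>l\<in>{0..<k}. X $$ (i,l) * R $$ (l,j))"
    by (rule sum.cong) (use km in \<open>auto simp: Rz\<close>)
  also have "\<dots> = (first_cols k X * blk k R) $$ (i,j)"
    using X R i' j' km by (simp add: first_cols_def blk_def scalar_prod_def)
  finally show "first_cols k (X * R) $$ (i,j) = (first_cols k X * blk k R) $$ (i,j)" .
qed (use X R in \<open>auto simp: first_cols_def blk_def\<close>)

lemma blk_unimod:
  assumes R: "R \<in> unimod_diag m" and km: "k \<le> m"
  shows "blk k R \<in> unimod_diag k"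
  using R km unfolding unimod_diag_def blk_def diagonal_mat_def by auto

lemma ext_unimod:
  assumes R: "R \<in> unimod_diag k" and km: "k \<le> m"
  shows "\<exists>R' \<in> unimod_diag m. blk k R' = R"
proof -
  define R' where "R' = mat m m (\<lambda>(i,j). if i = j then (if i < k then R $$ (i,i) else 1) else 0)"
  have "R' \<in> unimod_diag m" using R unfolding R'_def unimod_diag_def diagonal_mat_def by auto
  moreover have "blk k R' = R"
    by (rule eq_matI) (use R km in \<open>auto simp: blk_def R'_def unimod_diag_def diagonal_mat_def\<close>)
  ultimately show ?thesis by blast
qed

lemma rho_upd:
  assumes "length Us = d" "p < d"
  shows "rho d r (Us[p := Y]) = (rho d r Us)[p := first_cols (r p) Y]"
  using assms unfolding rho_def by (auto intro!: nth_equalityI simp: nth_list_update)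

lemma length_rho[simp]: "length (rho d r Us) = d" unfolding rho_def by simp

lemma nth_rho[simp]: "q < d \<Longrightarrow> rho d r Us ! q = first_cols (r q) (Us ! q)"
  unfolding rho_def by simp
theorem corollary2p5:
  fixes d :: nat and r n :: "nat \<Rightarrow> nat" and f :: "complex mat list \<Rightarrow> real"
  assumes "d \<ge> 2"
    and "\<forall>p<d. 1 \<le> r p \<and> r p \<le> n p"
  shows "multi_scale_inv d r n f \<longleftrightarrow> multi_scale_inv d n n (f \<circ> rho d r)"
proof
  assume F: "multi_scale_inv d r n f"
  show "multi_scale_inv d n n (f \<circ> rho d r)"
    unfolding multi_scale_inv_def scale_inv_St_def
  proof (intro allI impI ballI)
    fix p Us X R
    assume p: "p < d"
      and Us: "length Us = d \<and> (\<forall>q<d. q \<noteq> p \<longrightarrow> Us ! q \<in> stiefel (n q) (n q))"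
      and X: "X \<in> stiefel (n p) (n p)" and R: "R \<in> unimod_diag (n p)"
    have rp: "r p \<le> n p" using assms(2) p by auto
    have Xc: "X \<in> carrier_mat (n p) (n p)" using X unfolding stiefel_def by auto
    have Rc: "R \<in> carrier_mat (n p) (n p)" "diagonal_mat R" using R unfolding unimod_diag_def by auto
    define Xs where "Xs = rho d r Us"
    have Xs: "length Xs = d \<and> (\<forall>q<d. q \<noteq> p \<longrightarrow> Xs ! q \<in> stiefel (r q) (n q))"
      unfolding Xs_def using Us assms(2) by (auto intro: first_cols_stiefel)
    have si: "scale_inv_St (r p) (n p) (\<lambda>X. f (Xs[p := X]))"
      using F p Xs unfolding multi_scale_inv_def by blast
    have "f (Xs[p := first_cols (r p) X * blk (r p) R]) = f (Xs[p := first_cols (r p) X])"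
      using si first_cols_stiefel[OF X rp] blk_unimod[OF R rp] unfolding scale_inv_St_def by blast
    then show "(f \<circ> rho d r) (Us[p := X * R]) = (f \<circ> rho d r) (Us[p := X])"
      using rho_upd[of Us d p r] Us p first_cols_mult[OF Xc Rc rp] unfolding Xs_def by simp
  qed
next
  assume F: "multi_scale_inv d n n (f \<circ> rho d r)"
  show "multi_scale_inv d r n f"
    unfolding multi_scale_inv_def scale_inv_St_def
  proof (intro allI impI ballI)
    fix p Xs X R
    assume p: "p < d"
      and Xs: "length Xs = d \<and> (\<forall>q<d. q \<noteq> p \<longrightarrow> Xs ! q \<in> stiefel (r q) (n q))"
      and X: "X \<in> stiefel (r p) (n p)" and R: "R \<in> unimod_diag (r p)"
    have rp: "r p \<le> n p" using assms(2) p by auto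
    have "\<forall>q. \<exists>U. q < d \<and> q \<noteq> p \<longrightarrow> U \<in> stiefel (n q) (n q) \<and> first_cols (r q) U = Xs ! q"
      using Xs assms(2) stiefel_complete by blast
    then obtain g where g: "\<And>q. q < d \<Longrightarrow> q \<noteq> p \<Longrightarrow> g q \<in> stiefel (n q) (n q) \<and> first_cols (r q) (g q) = Xs ! q"
      by metis
    obtain UX where UX: "UX \<in> stiefel (n p) (n p)" "first_cols (r p) UX = X"
      using stiefel_complete[OF X rp] by blast
    obtain R' where R': "R' \<in> unimod_diag (n p)" "blk (r p) R' = R"
      using ext_unimod[OF R rp] by blast
    have UXc: "UX \<in> carrier_mat (n p) (n p)" using UX unfolding stiefel_def by auto
    have R'c: "R' \<in> carrier_mat (n p) (n p)" "diagonal_mat R'" using R' unfolding unimod_diag_def by auto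
    define Us where "Us = map g [0..<d]"
    have Us: "length Us = d \<and> (\<forall>q<d. q \<noteq> p \<longrightarrow> Us ! q \<in> stiefel (n q) (n q))"
      unfolding Us_def using g by auto
    have si: "scale_inv_St (n p) (n p) (\<lambda>X. (f \<circ> rho d r) (Us[p := X]))"
      using F p Us unfolding multi_scale_inv_def by blast
    have eq: "(f \<circ> rho d r) (Us[p := UX * R']) = (f \<circ> rho d r) (Us[p := UX])"
      using si UX(1) R'(1) unfolding scale_inv_St_def by blast
    have rr: "(rho d r Us)[p := Y] = Xs[p := Y]" for Y
      by (rule nth_equalityI) (use Xs g p in \<open>auto simp: Us_def nth_list_update\<close>)
    show "f (Xs[p := X * R]) = f (Xs[p := X])"
      using eq rho_upd[of Us d p r] Us p first_cols_mult[OF UXc R'c rp] UX(2) R'(2) rr by simp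
  qed
qed
end
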